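(* Let $K$ be a number field, $0<\alpha<1$, and suppose there is $\mathcal{C}_K>0$ with $|f_1(x,K)|\leq\mathcal{C}_K x^{\alpha}$ for all $x\geq1$. Then for all $x\geq1$, $$|f_2(x,K)|\leq\mathcal{C}_K x^{\alpha}\left(\log x+\frac{1-x^{-\alpha}}{\alpha}\right).$$
   Context: Write $\zeta_K(s)=\sum_{n\geq1}c_K(n)n^{-s}$ for the Dedekind zeta function of $K$ ($c_K(n)$ = number of ideals of $\mathcal{O}_K$ of norm $n$) and $\rho_K$ for its residue at $s=1$. Define $f_1(x,K):=\sum_{n\leq x}c_K(n)-\rho_K x$ and $f_2(x,K):=\sum_{n\leq x}c_K(n)\log n-\rho_K(x\log x-x+1)$. *)

theory Defs
  imports "HOL-Analysis.Analysis" "HOL-Computational_Algebra.Polynomial"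
begin

text \<open>A number field, realised as a subfield of the complex numbers that is
finite-dimensional as a vector space over the rationals.\<close>
definition number_field :: "complex set \<Rightarrow> bool" where
  "number_field K \<longleftrightarrow>
     0 \<in> K \<and> 1 \<in> K \<and>
     (\<forall>x\<in>K. \<forall>y\<in>K. x + y \<in> K \<and> x - y \<in> K \<and> x * y \<in> K) \<and>
     (\<forall>x\<in>K. inverse x \<in> K) \<and>
     (\<exists>B. finite B \<and> B \<subseteq> K \<and>
        (\<forall>x\<in>K. \<exists>q :: complex \<Rightarrow> rat. x = (\<Sum>b\<in>B. of_rat (q b) * b)))"

definition ring_of_integers :: "complex set \<Rightarrow> complex set" where
  "ring_of_integers K = {x \<in> K. algebraic_int x}"

definition is_ideal_of :: "complex set \<Rightarrow> complex set \<Rightarrow> bool" where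
  "is_ideal_of R I \<longleftrightarrow> I \<subseteq> R \<and> 0 \<in> I \<and>
     (\<forall>x\<in>I. \<forall>y\<in>I. x + y \<in> I \<and> - x \<in> I) \<and>
     (\<forall>r\<in>R. \<forall>x\<in>I. r * x \<in> I)"

text \<open>Absolute norm of an ideal: the index of I in R (number of cosets).\<close>
definition ideal_norm :: "complex set \<Rightarrow> complex set \<Rightarrow> nat" where
  "ideal_norm R I = card ((\<lambda>x. (+) x ` I) ` R)"

definition cK :: "complex set \<Rightarrow> nat \<Rightarrow> nat" where
  "cK K n = card {I. is_ideal_of (ring_of_integers K) I \<and> I \<noteq> {0} \<and>
                     ideal_norm (ring_of_integers K) I = n}"

definition dedekind_zeta :: "complex set \<Rightarrow> real \<Rightarrow> real" where
  "dedekind_zeta K s = (\<Sum>n. real (cK K (Suc n)) / real (Suc n) powr s)"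

text \<open>Residue at s = 1 (simple pole), computed as the limit of (s-1) zeta_K(s)
as s tends to 1 from the right.\<close>
definition rhoK :: "complex set \<Rightarrow> real" where
  "rhoK K = Lim (at_right 1) (\<lambda>s. (s - 1) * dedekind_zeta K s)"

definition f1 :: "real \<Rightarrow> complex set \<Rightarrow> real" where
  "f1 x K = (\<Sum>n\<in>{1..nat \<lfloor>x\<rfloor>}. real (cK K n)) - rhoK K * x"

definition f2 :: "real \<Rightarrow> complex set \<Rightarrow> real" where
  "f2 x K = (\<Sum>n\<in>{1..nat \<lfloor>x\<rfloor>}. real (cK K n) * ln (real n))
            - rhoK K * (x * ln x - x + 1)"

end

theory Submission
  imports Defs
begin

lemma piece_le:
  fixes a b Ak r C \<alpha> :: real
  assumes "0 < a" "a \<le> b" "0 < \<alpha>"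
    and h: "\<And>t. a \<le> t \<Longrightarrow> t < b \<Longrightarrow> Ak - r * t \<le> C * t powr \<alpha>"
  shows "Ak * (ln b - ln a) - r * (b - a) \<le> C * (b powr \<alpha> - a powr \<alpha>) / \<alpha>"
proof -
  define G where "G t = C * t powr \<alpha> / \<alpha> - (Ak * ln t - r * t)" for t
  have der: "DERIV G t :> C * t powr (\<alpha> - 1) - (Ak / t - r)" if "0 < t" for t
    unfolding G_def using that assms(3)
    by (auto intro!: derivative_eq_intros simp: field_simps)
  have "G a \<le> G b"
  proof (rule DERIV_nonneg_imp_increasing_open[OF assms(2)])
    fix t assume t: "a < t" "t < b"
    have tp: "0 < t" using t assms by linarith
    have "t powr (\<alpha> - 1) = t powr \<alpha> / t" using tp by (simp add: powr_diff)
    hence "C * t powr (\<alpha> - 1) - (Ak / t - r) = (C * t powr \<alpha> - (Ak - r * t)) / t"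
      using tp by (simp add: field_simps)
    moreover have "C * t powr \<alpha> - (Ak - r * t) \<ge> 0" using h[of t] t by linarith
    ultimately have "C * t powr (\<alpha> - 1) - (Ak / t - r) \<ge> 0" using tp by simp
    thus "\<exists>y. DERIV G t :> y \<and> y \<ge> 0" using der[OF tp] by blast
  next
    show "continuous_on {a..b} G"
      by (rule DERIV_continuous_on[where D="\<lambda>t. C * t powr (\<alpha> - 1) - (Ak / t - r)"])
         (use der assms in \<open>auto intro: has_field_derivative_at_within\<close>)
  qed
  moreover have "C * (b powr \<alpha> - a powr \<alpha>) / \<alpha> = C * b powr \<alpha> / \<alpha> - C * a powr \<alpha> / \<alpha>"
    by (simp add: right_diff_distrib diff_divide_distrib)
  ultimately show ?thesis unfolding G_def by (simp add: algebra_simps)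
qed

lemma piece_abs:
  fixes a b Ak r C \<alpha> :: real
  assumes "0 < a" "a \<le> b" "0 < \<alpha>"
    and h: "\<And>t. a \<le> t \<Longrightarrow> t < b \<Longrightarrow> \<bar>Ak - r * t\<bar> \<le> C * t powr \<alpha>"
  shows "\<bar>Ak * (ln b - ln a) - r * (b - a)\<bar> \<le> C * (b powr \<alpha> - a powr \<alpha>) / \<alpha>"
proof -
  have 1: "Ak * (ln b - ln a) - r * (b - a) \<le> C * (b powr \<alpha> - a powr \<alpha>) / \<alpha>"
    by (rule piece_le[OF assms(1-3)]) (use h in force)
  have 2: "(-Ak) * (ln b - ln a) - (-r) * (b - a) \<le> C * (b powr \<alpha> - a powr \<alpha>) / \<alpha>"
    by (rule piece_le[OF assms(1-3)]) (use h in force)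
  show ?thesis using 1 2 by linarith
qed

lemma nat_floor_eq:
  fixes t :: real and k :: nat
  assumes "real k \<le> t" "t < real k + 1"
  shows "nat \<lfloor>t\<rfloor> = k"
proof -
  have "\<lfloor>t\<rfloor> = int k" using assms by (simp add: floor_eq_iff)
  thus ?thesis by simp
qed

lemma Q_bound:
  fixes c :: "nat \<Rightarrow> real" and r C \<alpha> :: real
  assumes "0 < \<alpha>"
    and H: "\<And>k t. 1 \<le> k \<Longrightarrow> real k \<le> t \<Longrightarrow> t < real k + 1 \<Longrightarrow>
              \<bar>(\<Sum>n=1..k. c n) - r * t\<bar> \<le> C * t powr \<alpha>"
    and N: "1 \<le> N"
  shows "\<forall>x. real N \<le> x \<longrightarrow> x \<le> real N + 1 \<longrightarrow>
     \<bar>(\<Sum>n=1..N. c n * ln (real n)) - (\<Sum>n=1..N. c n) * ln x + r * (x - 1)\<bar>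
       \<le> C * (x powr \<alpha> - 1) / \<alpha>"
  using N
proof (induction N rule: nat_induct_at_least)
  case base
  show ?case
  proof (intro allI impI)
    fix x :: real assume x: "real 1 \<le> x" "x \<le> real 1 + 1"
    have "\<bar>c 1 * (ln x - ln 1) - r * (x - 1)\<bar> \<le> C * (x powr \<alpha> - 1 powr \<alpha>) / \<alpha>"
      by (rule piece_abs) (use x assms H[of 1] in auto)
    moreover have "\<bar>(\<Sum>n=1..1. c n * ln (real n)) - (\<Sum>n=1..1. c n) * ln x + r * (x - 1)\<bar>
        = \<bar>c 1 * (ln x - ln 1) - r * (x - 1)\<bar>" by (simp add: abs_minus_commute)
    ultimately show "\<bar>(\<Sum>n=1..1. c n * ln (real n)) - (\<Sum>n=1..1. c n) * ln x + r * (x - 1)\<bar>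
       \<le> C * (x powr \<alpha> - 1) / \<alpha>" by simp
  qed
next
  case (Suc N)
  show ?case
  proof (intro allI impI)
    fix x :: real assume x: "real (Suc N) \<le> x" "x \<le> real (Suc N) + 1"
    define A where "A = (\<Sum>n=1..N. c n)"
    define S where "S = (\<Sum>n=1..N. c n * ln (real n))"
    have AS: "(\<Sum>n=1..Suc N. c n) = A + c (Suc N)"
      "(\<Sum>n=1..Suc N. c n * ln (real n)) = S + c (Suc N) * ln (real (Suc N))"
      unfolding A_def S_def by simp_all
    have i1: "\<bar>S - A * ln (real N + 1) + r * (real N + 1 - 1)\<bar> \<le> C * ((real N + 1) powr \<alpha> - 1) / \<alpha>"
      using Suc.IH[rule_format, of "real N + 1"] unfolding A_def S_def by simp
    have i2: "\<bar>(A + c (Suc N)) * (ln x - ln (real (Suc N))) - r * (x - real (Suc N))\<bar>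
       \<le> C * (x powr \<alpha> - real (Suc N) powr \<alpha>) / \<alpha>"
    proof (rule piece_abs)
      fix t assume t: "real (Suc N) \<le> t" "t < x"
      have "\<bar>(\<Sum>n=1..Suc N. c n) - r * t\<bar> \<le> C * t powr \<alpha>"
        by (rule H) (use t x in auto)
      thus "\<bar>A + c (Suc N) - r * t\<bar> \<le> C * t powr \<alpha>" using AS by simp
    qed (use x assms in auto)
    have eq: "S + c (Suc N) * ln (real (Suc N)) - (A + c (Suc N)) * ln x + r * (x - 1)
      = (S - A * ln (real N + 1) + r * (real N + 1 - 1))
        - ((A + c (Suc N)) * (ln x - ln (real (Suc N))) - r * (x - real (Suc N)))"
      by (simp add: algebra_simps)
    have "\<bar>S + c (Suc N) * ln (real (Suc N)) - (A + c (Suc N)) * ln x + r * (x - 1)\<bar>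
       \<le> C * ((real N + 1) powr \<alpha> - 1) / \<alpha> + C * (x powr \<alpha> - real (Suc N) powr \<alpha>) / \<alpha>"
      unfolding eq using i1 i2 by linarith
    also have "\<dots> = C * (x powr \<alpha> - 1) / \<alpha>"
      by (simp add: add_divide_distrib[symmetric] algebra_simps)
    finally show "\<bar>(\<Sum>n=1..Suc N. c n * ln (real n)) - (\<Sum>n=1..Suc N. c n) * ln x + r * (x - 1)\<bar>
       \<le> C * (x powr \<alpha> - 1) / \<alpha>" using AS by simp
  qed
qed

theorem lemma2:
  fixes K :: "complex set" and \<alpha> C :: real
  assumes "number_field K"
    and "0 < \<alpha>" and "\<alpha> < 1"
    and "C > 0"
    and "\<forall>x\<ge>1. \<bar>f1 x K\<bar> \<le> C * x powr \<alpha>"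
  shows "\<forall>x\<ge>1. \<bar>f2 x K\<bar> \<le> C * x powr \<alpha> * (ln x + (1 - x powr (- \<alpha>)) / \<alpha>)"
proof (intro allI impI)
  fix x :: real assume x1: "x \<ge> 1"
  define c where "c n = real (cK K n)" for n
  define r where "r = rhoK K"
  have H: "\<bar>(\<Sum>n=1..k. c n) - r * t\<bar> \<le> C * t powr \<alpha>"
    if "1 \<le> k" "real k \<le> t" "t < real k + 1" for k t
  proof -
    have "nat \<lfloor>t\<rfloor> = k" using nat_floor_eq that by blast
    moreover have "t \<ge> 1" using that by linarith
    ultimately show ?thesis using assms(5) unfolding f1_def c_def r_def by auto
  qed
  define N where "N = nat \<lfloor>x\<rfloor>"
  have N1: "1 \<le> N" unfolding N_def using x1 by linarith
  have Nx: "real N \<le> x" "x \<le> real N + 1" unfolding N_def using x1 by linarith+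
  have Q: "\<bar>(\<Sum>n=1..N. c n * ln (real n)) - (\<Sum>n=1..N. c n) * ln x + r * (x - 1)\<bar>
       \<le> C * (x powr \<alpha> - 1) / \<alpha>"
    using Q_bound[OF assms(2) H N1] Nx by blast
  have F1: "f1 x K = (\<Sum>n=1..N. c n) - r * x" unfolding f1_def c_def r_def N_def by simp
  have F2: "f2 x K = (f1 x K) * ln x +
      ((\<Sum>n=1..N. c n * ln (real n)) - (\<Sum>n=1..N. c n) * ln x + r * (x - 1))"
    unfolding f2_def F1 unfolding c_def r_def N_def by (simp add: algebra_simps)
  have lnx: "ln x \<ge> 0" using x1 by simp
  have "\<bar>f1 x K * ln x\<bar> \<le> C * x powr \<alpha> * ln x"
    using assms(5) x1 lnx by (simp add: abs_mult mult_right_mono)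
  hence "\<bar>f2 x K\<bar> \<le> C * x powr \<alpha> * ln x + C * (x powr \<alpha> - 1) / \<alpha>"
    unfolding F2 using Q by linarith
  also have "\<dots> = C * x powr \<alpha> * (ln x + (1 - x powr (- \<alpha>)) / \<alpha>)"
  proof -
    have "x powr \<alpha> * x powr (- \<alpha>) = 1" using x1 by (simp add: powr_add[symmetric])
    thus ?thesis using assms(2) by (simp add: field_simps)
  qed
  finally show "\<bar>f2 x K\<bar> \<le> C * x powr \<alpha> * (ln x + (1 - x powr (- \<alpha>)) / \<alpha>)" .
qed

end
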